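(* Let $n,m$ be positive integers, let $A_1,\dots,A_m\in\mathbb{S}_n$, and let $\mathcal{A}:\mathbb{S}_n\to\mathbb{R}^m$, $\mathcal{A}(X)=(\langle A_i,X\rangle)_{i=1}^m$, with adjoint $\mathcal{A}^*(y)=\sum_{i=1}^m y_iA_i$. Assume $\mathcal{A}\mathcal{A}^*$ is invertible. Let $b\in\mathbb{R}^m$, $C\in\mathbb{S}_n$, and $D:=\mathcal{A}^*\big((\mathcal{A}\mathcal{A}^* )^{-1}b\big)$. Assume that the problem $$\inf_{y\in\mathbb{R}^m} b^{\intercal}y\quad\text{s.t.}\quad S=\mathcal{A}^*(y)-C\succeq 0,\ \operatorname{diag}(S)=\mathbf{1}\qquad(\mathrm{DSDP})$$ admits a KKT point (defined in the context). Let $0<\sigma_{\min}<\sigma_{\max}$ and let $\{\varepsilon_k\}_{k\in\mathbb{N}},\{\tau_k\}_{k\in\mathbb{N}}\subseteq(0,\infty)$ satisfy $\sum_{k=0}^\infty\varepsilon_k<\infty$ and $\sum_{k=0}^\infty\tau_k<\infty$. Consider sequences generated as follows: $y^0=0$, $\widetilde{X}^0=0$, and for $k=0,1,2,\dots$: choose $\sigma_k\in[\sigma_{\min},\sigma_{\max}]$, a positive integer $p_{k+1}$ and a matrix $Y^{k+1}\in\mathbb{R}^{n\times p_{k+1}}$ all of whose rows have Euclidean norm $1$; set $S^{k+1}=Y^{k+1}(Y^{k+1})^{\intercal}$, $y^{k+1}=(\mathcal{A}\mathcal{A}^* )^{-1}\mathcal{A}(S^{k+1}+C)$, $\widetilde{X}^{k+1}=\widetilde{X}^k-\sigma_k\big(\mathcal{A}^*(y^{k+1})-S^{k+1}-C\big)$,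 $z^{k+1}=\operatorname{diag}\big((\widetilde{X}^{k+1}+D)S^{k+1}\big)$, $X^{k+1}=\widetilde{X}^{k+1}+D-\operatorname{Diag}(z^{k+1})$; and suppose $Y^{k+1}$ satisfies the stopping criterion $$\|X^{k+1}Y^{k+1}\|\le\varepsilon_k\quad\text{and}\quad\lambda_{\min}(X^{k+1})\ge-\tau_k .$$ Let $(\hat S,\hat y,\hat X,\hat z)$ be a limit point of $\{(S^k,y^k,X^k,z^k)\}_{k\ge1}$. Then $(\hat S,\hat y,\hat X,\hat z)$ is a KKT point of (DSDP).
   Context: $\mathbb{S}_n$ is the space of real symmetric $n\times n$ matrices, $\mathbb{S}_n^+$ its PSD cone; $\langle A,B\rangle=\mathrm{Tr}(A^{\intercal}B)$ and $\|\cdot\|$ is the Frobenius norm. For a square matrix $M$, $\operatorname{diag}(M)$ is the vector of its diagonal entries; for a vector $z$, $\operatorname{Diag}(z)$ is the diagonal matrix with diagonal $z$; $\mathbf{1}$ is the all-ones vector; $\lambda_{\min}$ denotes the smallest eigenvalue. A KKT point of (DSDP) is a tuple $(S,y,X,z)\in\mathbb{S}_n\times\mathbb{R}^m\times\mathbb{S}_n\times\mathbb{R}^n$ with $S=\mathcal{A}^*(y)-C$, $S\succeq0$, $\operatorname{diag}(S)=\mathbf{1}$, $X\succeq0$, $\langle X,S\rangle=0$, and $\mathcal{A}(X+\operatorname{Diag}(z))=b$. In the paper's algorithm, $Y^{k+1}$ is obtained by approximately minimizing $Y\mapsto L_{\sigma_k}(YY^{\intercal},y^k,\widetilde{X}^k)$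 over matrices with unit-norm rows, where $L_\sigma(S,y,\widetilde{X})=\langle D,S+C\rangle-\langle\widetilde{X},\mathcal{A}^*(y)-S-C\rangle+\frac{\sigma}{2}\|\mathcal{A}^*(y)-S-C\|^2$; the result only uses the stopping criterion stated. *)

theory Defs
  imports "HOL-Analysis.Analysis"
begin

type_synonym 'n mat = "real^'n^'n"

definition symm :: "'n::finite mat \<Rightarrow> bool" where
  "symm M \<longleftrightarrow> transpose M = M"

definition psd :: "'n::finite mat \<Rightarrow> bool" where
  "psd M \<longleftrightarrow> symm M \<and> (\<forall>v. 0 \<le> v \<bullet> (M *v v))"

definition frob_inner :: "'n::finite mat \<Rightarrow> 'n mat \<Rightarrow> real" where
  "frob_inner M N = (\<Sum>i\<in>UNIV. \<Sum>j\<in>UNIV. M$i$j * N$i$j)"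

definition diagv :: "'n::finite mat \<Rightarrow> real^'n" where
  "diagv M = (\<chi> i. M$i$i)"

definition Diagm :: "real^'n::finite \<Rightarrow> 'n mat" where
  "Diagm z = (\<chi> i j. if i = j then z$i else 0)"

definition Aop :: "('m::finite \<Rightarrow> 'n::finite mat) \<Rightarrow> 'n mat \<Rightarrow> real^'m" where
  "Aop A X = (\<chi> i. frob_inner (A i) X)"

definition Aadj :: "('m::finite \<Rightarrow> 'n::finite mat) \<Rightarrow> real^'m \<Rightarrow> 'n mat" where
  "Aadj A y = (\<Sum>i\<in>UNIV. y$i *\<^sub>R A i)"

definition AAt :: "('m::finite \<Rightarrow> 'n::finite mat) \<Rightarrow> real^'m^'m" where
  "AAt A = (\<chi> i j. frob_inner (A i) (A j))"

definition lambda_min :: "'n::finite mat \<Rightarrow> real" where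
  "lambda_min M = Min {c. \<exists>v. v \<noteq> 0 \<and> M *v v = c *\<^sub>R v}"

definition is_KKT :: "('m::finite \<Rightarrow> 'n::finite mat) \<Rightarrow> real^'m \<Rightarrow> 'n mat
     \<Rightarrow> 'n mat \<Rightarrow> real^'m \<Rightarrow> 'n mat \<Rightarrow> real^'n \<Rightarrow> bool" where
  "is_KKT A b C S y X z \<longleftrightarrow>
     S = Aadj A y - C \<and> psd S \<and> diagv S = (\<chi> i. 1) \<and> psd X \<and>
     frob_inner X S = 0 \<and> Aop A (X + Diagm z) = b"

end

theory Submission
  imports Defs
begin


lemma frob_inner_eq: "frob_inner M N = M \<bullet> N"
  by (simp add: frob_inner_def inner_vec_def)

lemma symm_iff: "symm M \<longleftrightarrow> (\<forall>a b. M$a$b = M$b$a)"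
  by (auto simp: symm_def transpose_def vec_eq_iff)

lemma inv_right: "invertible M \<Longrightarrow> M ** matrix_inv M = mat 1"
  unfolding invertible_def matrix_inv_def by (rule someI_ex[THEN conjunct1])

lemma Aop_Aadj: "Aop A (Aadj A v) = AAt A *v v"
  by (simp add: Aop_def Aadj_def AAt_def frob_inner_eq vec_eq_iff matrix_vector_mult_def
      inner_sum_right mult.commute)

lemma Aadj_inner: "Aadj A y \<bullet> V = y \<bullet> Aop A V"
proof -
  have "Aadj A y \<bullet> V = (\<Sum>i\<in>UNIV. y$i * (A i \<bullet> V))"
    unfolding Aadj_def by (simp add: inner_sum_left)
  also have "\<dots> = y \<bullet> Aop A V"
    by (simp add: Aop_def frob_inner_eq inner_vec_def[of y])
  finally show ?thesis .
qed

lemma Aop_diff: "Aop A (M - N) = Aop A M - Aop A N"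
  by (simp add: Aop_def frob_inner_eq vec_eq_iff inner_diff_right)
lemma Aop_add: "Aop A (M + N) = Aop A M + Aop A N"
  by (simp add: Aop_def frob_inner_eq vec_eq_iff inner_add_right)
lemma Aop_scale: "Aop A (c *\<^sub>R M) = c *\<^sub>R Aop A M"
  by (simp add: Aop_def frob_inner_eq vec_eq_iff)

lemma Aop_inv: "invertible (AAt A) \<Longrightarrow> Aop A (Aadj A (matrix_inv (AAt A) *v v)) = v"
  by (simp add: Aop_Aadj matrix_vector_mul_assoc inv_right)

lemma Aadj_comp: "Aadj A y $ a $ c = (\<Sum>i\<in>UNIV. y$i * A i $ a $ c)"
  by (simp add: Aadj_def sum_component)

lemma Aadj_symm: "(\<And>i. symm (A i)) \<Longrightarrow> symm (Aadj A y)"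
  by (simp add: symm_iff Aadj_comp)

lemma Diagm_inner: "Diagm z \<bullet> M = (\<Sum>i\<in>UNIV. z$i * M$i$i)"
  by (simp add: Diagm_def inner_vec_def if_distrib[of "\<lambda>x. x * _"] cong: if_cong)

lemma mat1_inner: "mat 1 \<bullet> M = (\<Sum>i\<in>UNIV. M$i$i)"
  by (simp add: mat_def inner_vec_def if_distrib[of "\<lambda>x. x * _"] cong: if_cong)

lemma quad_expand: "(u + v) \<bullet> (M *v (u + v)) = u \<bullet> (M *v u) + u \<bullet> (M *v v) + v \<bullet> (M *v u) + v \<bullet> (M *v v)"
  by (simp add: matrix_vector_right_distrib inner_add_left inner_add_right)

lemma symm_inner: "symm M \<Longrightarrow> u \<bullet> (M *v v) = v \<bullet> (M *v u)"
  by (metis dot_lmul_matrix inner_commute symm_def transpose_matrix_vector)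



lemma mv_scale: fixes S :: "real^'n::finite^'m::finite" shows "S *v (t *\<^sub>R e) = t *\<^sub>R (S *v e)"
  by (simp add: vec_eq_iff matrix_vector_mult_def sum_distrib_left mult_ac vector_scaleR_component)

lemma mv_diff: fixes S :: "real^'n::finite^'m::finite" shows "S *v (u - w) = S *v u - S *v w"
  by (simp add: vec_eq_iff matrix_vector_mult_def right_diff_distrib sum_subtractf vector_minus_component)

lemma qexp: "symm S \<Longrightarrow> (v - t *\<^sub>R e) \<bullet> (S *v (v - t *\<^sub>R e)) =
   v \<bullet> (S *v v) - 2*t*(e \<bullet> (S *v v)) + t^2 * (e \<bullet> (S *v e))"
  using symm_inner[of S v e]
  by (simp add: mv_diff mv_scale inner_diff_left inner_diff_right power2_eq_square algebra_simps)

lemma qexp2: "symm S \<Longrightarrow> (v + t *\<^sub>R e) \<bullet> (S *v (v + t *\<^sub>R e)) =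
   v \<bullet> (S *v v) + 2*t*(e \<bullet> (S *v v)) + t^2 * (e \<bullet> (S *v e))"
  using qexp[of S v "-t" e] by simp

lemma axis_mv: "axis i 1 \<bullet> (S *v v) = (\<Sum>j\<in>UNIV. S$i$j * v$j)"
  by (simp add: inner_commute[of "axis i 1"] inner_axis matrix_vector_mult_def)

lemma mv_axis: "(S *v axis j 1) $ i = S$i$j"
  by (simp add: matrix_vector_mult_def axis_def if_distrib[of "\<lambda>x. _ * x"] cong: if_cong)

lemma axis_q: "axis i 1 \<bullet> (S *v axis i 1) = S$i$i"
  by (simp add: inner_commute[of "axis i 1"] inner_axis mv_axis)

lemma lin_nonneg: fixes a b :: real assumes "\<forall>t. 0 \<le> b - 2*t*a" shows "a = 0"
proof (rule ccontr)
  assume "a \<noteq> 0"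
  have "0 \<le> b - 2*((\<bar>b\<bar>+1)/(2*a))*a" using assms by blast
  also have "\<dots> = b - (\<bar>b\<bar>+1)" using \<open>a\<noteq>0\<close> by (simp add: field_simps)
  finally show False by linarith
qed

lemma zero_diag:
  assumes "symm S" "\<forall>v. 0 \<le> v \<bullet> (S *v v)" "S$i$i = 0"
  shows "S$i$j = 0"
proof -
  have "\<forall>t. 0 \<le> (axis j 1) \<bullet> (S *v axis j 1) - 2*t*(axis i 1 \<bullet> (S *v axis j 1))"
  proof
    fix t
    have "0 \<le> (axis j 1 - t *\<^sub>R axis i 1) \<bullet> (S *v (axis j 1 - t *\<^sub>R axis i 1))" using assms(2) by blast
    also have "\<dots> = (axis j 1) \<bullet> (S *v axis j 1) - 2*t*(axis i 1 \<bullet> (S *v axis j 1))"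
      using qexp[OF assms(1)] assms(3) axis_q[of i S] by simp
    finally show "0 \<le> (axis j 1) \<bullet> (S *v axis j 1) - 2*t*(axis i 1 \<bullet> (S *v axis j 1))" .
  qed
  from lin_nonneg[OF this] show ?thesis
    by (simp add: inner_commute[of "axis i 1"] inner_axis mv_axis)
qed

definition outer :: "real^'n::finite \<Rightarrow> real^'n^'n" where
  "outer s = (\<chi> a b. s$a * s$b)"

lemma outer_mv: "outer s *v v = (s \<bullet> v) *\<^sub>R s"
  by (simp add: outer_def vec_eq_iff matrix_vector_mult_def inner_vec_def sum_distrib_left mult_ac)

lemma outer_q: "v \<bullet> (outer s *v v) = (s \<bullet> v)^2"
  by (simp add: outer_mv power2_eq_square inner_commute)

lemma inner_outer: "M \<bullet> outer s = s \<bullet> (M *v s)"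
  by (simp add: outer_def inner_vec_def matrix_vector_mult_def sum_distrib_left mult_ac)

lemma psd_dual:
  "symm S \<Longrightarrow> \<forall>v. 0 \<le> v \<bullet> (S *v v) \<Longrightarrow> \<forall>v. 0 \<le> v \<bullet> (M *v v) \<Longrightarrow> 0 \<le> M \<bullet> S"
proof (induction "card {i. S$i$i \<noteq> 0}" arbitrary: S rule: less_induct)
  case less
  show ?case
  proof (cases "\<exists>i. S$i$i \<noteq> 0")
    case False
    then have "S = 0" using zero_diag[OF less.prems(1,2)] by (simp add: vec_eq_iff)
    thus ?thesis by simp
  next
    case True
    then obtain i where ne: "S$i$i \<noteq> 0" by blast
    define d where "d = S$i$i"
    have "0 \<le> d" unfolding d_def using less.prems(2) axis_q[of i S] by metis
    with ne have dpos: "0 < d" unfolding d_def by linarith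
    define s where "s = (\<chi> j. S$i$j)"
    define S' where "S' = S - (1/d) *\<^sub>R outer s"
    have sS: "symm S'" using less.prems(1) by (simp add: S'_def symm_iff outer_def mult.commute)
    have es: "axis i 1 \<bullet> (S *v v) = s \<bullet> v" for v
      unfolding axis_mv by (simp add: s_def inner_vec_def mult.commute)
    have pS': "\<forall>v. 0 \<le> v \<bullet> (S' *v v)"
    proof
      fix v
      have "0 \<le> (v - ((s \<bullet> v)/d) *\<^sub>R axis i 1) \<bullet> (S *v (v - ((s \<bullet> v)/d) *\<^sub>R axis i 1))"
        using less.prems(2) by blast
      also have "\<dots> = v \<bullet> (S *v v) - (s \<bullet> v)^2 / d"
        using qexp[OF less.prems(1), of v "(s \<bullet> v)/d" "axis i 1"] es[of v] axis_q[of i S] dpos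
        by (simp add: d_def[symmetric] power2_eq_square field_simps)
      also have "\<dots> = v \<bullet> (S' *v v)"
        by (simp add: S'_def matrix_vector_mult_diff_rdistrib outer_q inner_diff_right
             scaleR_matrix_vector_assoc[symmetric])
      finally show "0 \<le> v \<bullet> (S' *v v)" .
    qed
    have Sjj: "S'$j$j = S$j$j - (S$i$j)^2/d" for j
      by (simp add: S'_def outer_def s_def power2_eq_square)
    have sub: "{j. S'$j$j \<noteq> 0} \<subset> {j. S$j$j \<noteq> 0}"
    proof
      show "{j. S'$j$j \<noteq> 0} \<subseteq> {j. S$j$j \<noteq> 0}"
      proof
        fix j assume "j \<in> {j. S'$j$j \<noteq> 0}"
        then have a: "S'$j$j \<noteq> 0" by simp
        show "j \<in> {j. S$j$j \<noteq> 0}"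
        proof (rule ccontr)
          assume "j \<notin> {j. S$j$j \<noteq> 0}"
          then have "S$j$j = 0" by simp
          then have "S$j$i = 0" using zero_diag[OF less.prems(1,2)] by blast
          then have "S$i$j = 0" using less.prems(1) by (simp add: symm_iff)
          with \<open>S$j$j = 0\<close> a Sjj show False by simp
        qed
      qed
      have "S'$i$i = 0" using Sjj[of i] dpos by (simp add: d_def power2_eq_square)
      then show "{j. S'$j$j \<noteq> 0} \<noteq> {j. S$j$j \<noteq> 0}" using ne by blast
    qed
    have "card {j. S'$j$j \<noteq> 0} < card {j. S$j$j \<noteq> 0}"
      by (rule psubset_card_mono[OF _ sub]) simp
    from less.hyps[OF this sS pS' less.prems(3)] have "0 \<le> M \<bullet> S'" .
    moreover have "M \<bullet> S = M \<bullet> S' + (1/d) * (s \<bullet> (M *v s))"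
      by (simp add: S'_def inner_diff_right inner_outer)
    moreover have "0 \<le> s \<bullet> (M *v s)" using less.prems(3) by blast
    ultimately show ?thesis using dpos by simp
  qed
qed



lemma aux: fixes a K p :: real assumes "p > 0" shows "a*(-a/p) + K*(-a/p)^2 = a^2*(K-p)/p^2"
  using assms by (simp add: field_simps power2_eq_square)

lemma quad_nonneg_lin: fixes a K :: real assumes "\<forall>t. 0 \<le> a*t + K*t^2" "0 \<le> a" shows "a = 0"
proof (rule ccontr)
  assume "a \<noteq> 0" then have ap: "a > 0" using assms(2) by simp
  define t where "t = - a/(\<bar>K\<bar>+1)"
  have pos: "\<bar>K\<bar>+1 > 0" by simp
  have "0 \<le> a*t + K*t^2" using assms(1) by blast
  also have "\<dots> = a^2 * (K - (\<bar>K\<bar>+1)) / (\<bar>K\<bar>+1)^2"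
    using pos unfolding t_def by (rule aux)
  also have "\<dots> < 0"
    using ap pos by (intro divide_neg_pos mult_pos_neg) auto
  finally show False by simp
qed


lemma eig_finite:
  fixes M :: "real^'n::finite^'n"
  assumes "symm M"
  shows "finite {c. \<exists>v. v \<noteq> 0 \<and> M *v v = c *\<^sub>R v}"
proof -
  define E where "E = {c. \<exists>v. v \<noteq> 0 \<and> M *v v = c *\<^sub>R v}"
  define f where "f c = (SOME v. v \<noteq> 0 \<and> M *v v = c *\<^sub>R v)" for c
  have f: "f c \<noteq> 0 \<and> M *v f c = c *\<^sub>R f c" if "c \<in> E" for c
  proof -
    from that obtain v where "v \<noteq> 0 \<and> M *v v = c *\<^sub>R v" unfolding E_def by blast
    then show ?thesis unfolding f_def by (rule someI)
  qed
  have inj: "inj_on f E"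
  proof (rule inj_onI)
    fix c d assume c: "c \<in> E" and d: "d \<in> E" and e: "f c = f d"
    have "c *\<^sub>R f c = d *\<^sub>R f c" using f[OF c] f[OF d] e by metis
    then have "(c - d) *\<^sub>R f c = 0" by (simp add: scaleR_left_diff_distrib)
    then show "c = d" using f[OF c] by simp
  qed
  have orth: "pairwise orthogonal (f ` E)"
    unfolding pairwise_def
  proof (intro ballI impI)
    fix x y assume x: "x \<in> f ` E" and y: "y \<in> f ` E" and ne: "x \<noteq> y"
    from x obtain c where c: "c \<in> E" and xc: "x = f c" by (rule imageE)
    from y obtain d where d: "d \<in> E" and yd: "y = f d" by (rule imageE)
    have "c \<noteq> d" using ne xc yd by metis
    have "f d \<bullet> (M *v f c) = f c \<bullet> (M *v f d)" using symm_inner[OF assms] by blast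
    then have "c * (f c \<bullet> f d) = d * (f c \<bullet> f d)"
      using f[OF c] f[OF d] by (simp add: inner_commute[of "f d" "f c"])
    then have "(c - d) * (f c \<bullet> f d) = 0" by (simp add: left_diff_distrib)
    then show "orthogonal x y" unfolding xc yd orthogonal_def using \<open>c \<noteq> d\<close> by simp
  qed
  have "0 \<notin> f ` E"
  proof
    assume "0 \<in> f ` E"
    then obtain c where "c \<in> E" "0 = f c" by (rule imageE)
    with f show False by metis
  qed
  then have "independent (f ` E)" by (rule pairwise_orthogonal_independent[OF orth])
  then have "finite (f ` E)" by (rule independent_bound[THEN conjunct1])
  then show ?thesis unfolding E_def[symmetric] by (rule finite_imageD[OF _ inj])
qed

lemma lambda_min_quad:
  fixes M :: "real^'n::finite^'n"
  assumes sM: "symm M" and lam: "lambda_min M \<ge> - t"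
  shows "v \<bullet> (M *v v) \<ge> - t * (v \<bullet> v)"
proof -
  have "continuous_on (sphere (0::real^'n) 1) (\<lambda>v. v \<bullet> (M *v v))"
    by (intro continuous_intros)
  moreover have "sphere (0::real^'n) 1 \<noteq> {}" by simp
  ultimately obtain v0 where v0: "v0 \<in> sphere 0 1" and mn: "\<forall>u\<in>sphere 0 1. v0 \<bullet> (M *v v0) \<le> u \<bullet> (M *v u)"
    using continuous_attains_inf[OF compact_sphere] by blast
  define c where "c = v0 \<bullet> (M *v v0)"
  have n1: "v0 \<bullet> v0 = 1" using v0 by (simp add: dot_square_norm)
  have hom: "u \<bullet> (M *v u) \<ge> c * (u \<bullet> u)" for u
  proof (cases "u = 0")
    case True then show ?thesis by simp
  next
    case False
    define w where "w = (1/norm u) *\<^sub>R u"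
    have "w \<in> sphere 0 1" using False by (simp add: w_def)
    then have "c \<le> w \<bullet> (M *v w)" using mn unfolding c_def by blast
    also have "w \<bullet> (M *v w) = (u \<bullet> (M *v u)) / (norm u)^2"
      by (simp add: w_def mv_scale power2_eq_square)
    finally have "c * (norm u)^2 \<le> u \<bullet> (M *v u)" using False by (simp add: field_simps)
    then show ?thesis by (simp add: dot_square_norm)
  qed
  define w where "w = M *v v0 - c *\<^sub>R v0"
  have Mv0: "M *v v0 = w + c *\<^sub>R v0" by (simp add: w_def)
  have e1: "w \<bullet> (M *v v0) = w \<bullet> w + c * (v0 \<bullet> w)"
    unfolding Mv0 by (simp add: inner_add_right inner_commute[of w v0])
  have e2: "(v0 + t *\<^sub>R w) \<bullet> (v0 + t *\<^sub>R w) = 1 + 2*t*(v0 \<bullet> w) + t^2*(w \<bullet> w)" for t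
    by (simp add: inner_add_left inner_add_right n1 inner_commute[of w v0] power2_eq_square algebra_simps)
  have "\<forall>t. 0 \<le> (2 * (w \<bullet> w)) * t + (w \<bullet> (M *v w) - c * (w \<bullet> w)) * t^2"
  proof
    fix t :: real
    have "c * ((v0 + t *\<^sub>R w) \<bullet> (v0 + t *\<^sub>R w)) \<le> (v0 + t *\<^sub>R w) \<bullet> (M *v (v0 + t *\<^sub>R w))"
      using hom by blast
    also have "\<dots> = c + 2*t*(w \<bullet> (M *v v0)) + t^2 * (w \<bullet> (M *v w))"
      using qexp2[OF sM, of v0 t w] unfolding c_def by simp
    finally show "0 \<le> (2 * (w \<bullet> w)) * t + (w \<bullet> (M *v w) - c * (w \<bullet> w)) * t^2"
      unfolding e1 e2 by (simp add: algebra_simps)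
  qed
  from quad_nonneg_lin[OF this] have "w = 0" by simp
  then have "M *v v0 = c *\<^sub>R v0" by (simp add: w_def)
  moreover have "v0 \<noteq> 0" using v0 by auto
  ultimately have "c \<in> {c. \<exists>v. v \<noteq> 0 \<and> M *v v = c *\<^sub>R v}" by blast
  then have "lambda_min M \<le> c" unfolding lambda_min_def by (rule Min_le[OF eig_finite[OF sM]])
  then have "c \<ge> -t" using lam by simp
  then have "c * (v \<bullet> v) \<ge> -t * (v \<bullet> v)" by (intro mult_right_mono) auto
  then show ?thesis using hom[of v] by simp
qed


lemma Aadj_tendsto: "(f \<longlongrightarrow> a) F \<Longrightarrow> ((\<lambda>x. Aadj A (f x)) \<longlongrightarrow> Aadj A a) F"
  unfolding Aadj_def by (intro tendsto_intros)

lemma Aop_tendsto: "(f \<longlongrightarrow> a) F \<Longrightarrow> ((\<lambda>x. Aop A (f x)) \<longlongrightarrow> Aop A a) F"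
  unfolding Aop_def frob_inner_eq by (intro tendsto_intros)

lemma Diagm_tendsto: "(f \<longlongrightarrow> a) F \<Longrightarrow> ((\<lambda>x. Diagm (f x)) \<longlongrightarrow> Diagm a) F"
  unfolding Diagm_def by (intro tendsto_vec_lambda) (auto intro: tendsto_vec_nth)

lemma symm_lim: assumes "(f \<longlongrightarrow> L) sequentially" "\<And>j. symm (f j)" shows "symm L"
  unfolding symm_iff
proof (intro allI)
  fix a b
  have "((\<lambda>j. f j $ a $ b) \<longlongrightarrow> L $ a $ b) sequentially" using assms(1) by (intro tendsto_intros)
  moreover have "((\<lambda>j. f j $ a $ b) \<longlongrightarrow> L $ b $ a) sequentially"
    using assms(2) tendsto_vec_nth[OF tendsto_vec_nth[OF assms(1)], of b a] by (simp add: symm_iff)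
  ultimately show "L $ a $ b = L $ b $ a" by (rule LIMSEQ_unique)
qed

lemma quad_outer: "v \<bullet> (M *v v) = M \<bullet> outer v"
  by (simp add: inner_outer)

lemma gram_eq: fixes f :: "'j \<Rightarrow> real^'n::finite" shows "(\<chi> i l. \<Sum>j\<in>J. f j $ i * f j $ l) = (\<Sum>j\<in>J. outer (f j))"
  by (simp add: vec_eq_iff sum_component outer_def)

lemma gram_inner: fixes f :: "'j \<Rightarrow> real^'n::finite" shows "M \<bullet> (\<chi> i l. \<Sum>j\<in>J. f j $ i * f j $ l) = (\<Sum>j\<in>J. f j \<bullet> (M *v f j))"
  by (simp add: gram_eq inner_sum_right inner_outer)

lemma gram_psd: fixes f :: "'j \<Rightarrow> real^'n::finite" shows "0 \<le> v \<bullet> ((\<chi> i l. \<Sum>j\<in>J. f j $ i * f j $ l) *v v)"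
proof -
  have "v \<bullet> ((\<chi> i l. \<Sum>j\<in>J. f j $ i * f j $ l) *v v) = (\<chi> i l. \<Sum>j\<in>J. f j $ i * f j $ l) \<bullet> outer v"
    by (rule quad_outer)
  also have "\<dots> = outer v \<bullet> (\<chi> i l. \<Sum>j\<in>J. f j $ i * f j $ l)" by (rule inner_commute)
  also have "\<dots> = (\<Sum>j\<in>J. f j \<bullet> (outer v *v f j))" by (rule gram_inner)
  also have "\<dots> = (\<Sum>j\<in>J. (v \<bullet> f j)^2)" by (simp only: outer_q)
  finally show ?thesis by (simp add: sum_nonneg)
qed

lemma gram_symm: fixes f :: "'j \<Rightarrow> real^'n::finite" shows "symm (\<chi> i l. \<Sum>j\<in>J. f j $ i * f j $ l)"
  by (simp add: symm_iff mult.commute)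

lemma shift_mat1: fixes M :: "real^'n::finite^'n" shows "(M + t *\<^sub>R mat 1) *v v = M *v v + t *\<^sub>R v"
proof -
  have "(t *\<^sub>R mat 1) *v v = t *\<^sub>R v" 
    by (simp add: vec_eq_iff matrix_vector_mult_def mat_def if_distrib[of "\<lambda>x. x * _"] if_distrib[of "\<lambda>x. _ * x"] cong: if_cong)
  then show ?thesis by (simp add: matrix_vector_mult_add_rdistrib)
qed

lemma fejer_id: fixes U r :: "'a::real_inner"
  shows "(U + s *\<^sub>R r) \<bullet> (U + s *\<^sub>R r) = U \<bullet> U + 2 * s * ((U + s *\<^sub>R r) \<bullet> r) - s^2 * (r \<bullet> r)"
proof -
  have "(U + s *\<^sub>R r) \<bullet> (U + s *\<^sub>R r) = U \<bullet> U + 2 * s * (U \<bullet> r) + s^2 * (r \<bullet> r)"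
    by (simp add: inner_add_left inner_add_right inner_commute[of r U] power2_eq_square algebra_simps)
  moreover have "(U + s *\<^sub>R r) \<bullet> r = U \<bullet> r + s * (r \<bullet> r)"
    by (simp add: inner_add_left)
  ultimately show ?thesis by (simp add: power2_eq_square algebra_simps)
qed



lemma symm_add: "symm M \<Longrightarrow> symm N \<Longrightarrow> symm (M + N)" by (simp add: symm_iff)
lemma symm_diff: "symm M \<Longrightarrow> symm N \<Longrightarrow> symm (M - N)" by (simp add: symm_iff)
lemma symm_scale: "symm M \<Longrightarrow> symm (c *\<^sub>R M)" by (simp add: symm_iff)
lemma symm_zero: "symm (0::real^'n::finite^'n)" by (simp add: symm_iff)
lemma symm_Diagm: "symm (Diagm z)" by (simp add: symm_iff Diagm_def)
lemma Aop_zero: "Aop A 0 = 0" by (simp add: Aop_def frob_inner_eq vec_eq_iff)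

theorem theorem5p1:
  fixes A :: "'m::finite \<Rightarrow> real^'n::finite^'n"
    and b :: "real^'m" and C :: "real^'n^'n"
    and sigma_min sigma_max :: real
    and eps tau sigma :: "nat \<Rightarrow> real"
    and p :: "nat \<Rightarrow> nat"
    and Y :: "nat \<Rightarrow> nat \<Rightarrow> real^'n"
    and S X Xt :: "nat \<Rightarrow> real^'n^'n"
    and y :: "nat \<Rightarrow> real^'m" and z :: "nat \<Rightarrow> real^'n"
    and Sh Xh :: "real^'n^'n" and yh :: "real^'m" and zh :: "real^'n"
  assumes symA: "\<And>i. symm (A i)"
    and inv: "invertible (AAt A)"
    and symC: "symm C"
    and KKT_exists: "\<exists>S0 y0 X0 z0. is_KKT A b C S0 y0 X0 z0"
    and sig: "0 < sigma_min" "sigma_min < sigma_max"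
    and eps_pos: "\<And>k. 0 < eps k" and eps_sum: "summable eps"
    and tau_pos: "\<And>k. 0 < tau k" and tau_sum: "summable tau"
    and y0: "y 0 = 0" and Xt0: "Xt 0 = 0"
    and sigk: "\<And>k. sigma_min \<le> sigma k \<and> sigma k \<le> sigma_max"
    and ppos: "\<And>k. 0 < p (Suc k)"
    and rows: "\<And>k i. (\<Sum>j<p (Suc k). (Y (Suc k) j $ i)^2) = 1"
    and Sdef: "\<And>k. S (Suc k) = (\<chi> i l. \<Sum>j<p (Suc k). Y (Suc k) j $ i * Y (Suc k) j $ l)"
    and ydef: "\<And>k. y (Suc k) = matrix_inv (AAt A) *v Aop A (S (Suc k) + C)"
    and Xtdef: "\<And>k. Xt (Suc k) = Xt k - sigma k *\<^sub>R (Aadj A (y (Suc k)) - S (Suc k) - C)"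
    and zdef: "\<And>k. z (Suc k) = diagv ((Xt (Suc k) + Aadj A (matrix_inv (AAt A) *v b)) ** S (Suc k))"
    and Xdef: "\<And>k. X (Suc k) = Xt (Suc k) + Aadj A (matrix_inv (AAt A) *v b) - Diagm (z (Suc k))"
    and stop1: "\<And>k. sqrt (\<Sum>j<p (Suc k). (norm (X (Suc k) *v Y (Suc k) j))^2) \<le> eps k"
    and stop2: "\<And>k. lambda_min (X (Suc k)) \<ge> - tau k"
    and limpt: "\<exists>r. strict_mono r \<and> (\<forall>j. 1 \<le> r j) \<and>
        ((\<lambda>j. (S (r j), y (r j), X (r j), z (r j))) \<longlongrightarrow> (Sh, yh, Xh, zh)) sequentially"
  shows "is_KKT A b C Sh yh Xh zh"
proof -
  obtain Ss ys Xs zs where K: "is_KKT A b C Ss ys Xs zs" using KKT_exists by blast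
  from K have Ss_eq: "Ss = Aadj A ys - C" and psdSs: "psd Ss" and dSs: "diagv Ss = (\<chi> i. 1)"
    and psdXs: "psd Xs" and XsSs: "Xs \<bullet> Ss = 0" and AXs: "Aop A (Xs + Diagm zs) = b"
    unfolding is_KKT_def frob_inner_eq by auto
  define D where "D = Aadj A (matrix_inv (AAt A) *v b)"
  define res where "res k = S (Suc k) + C - Aadj A (y (Suc k))" for k
  define W where "W = Xs + Diagm zs - D"
  define N where "N = real CARD('n)"
  have Xt_step: "Xt (Suc k) = Xt k + sigma k *\<^sub>R res k" for k
    using Xtdef[of k] by (simp add: res_def algebra_simps)
  have Aop_res: "Aop A (res k) = 0" for k
    using ydef[of k] Aop_inv[OF inv, of "Aop A (S (Suc k) + C)"] by (simp add: res_def Aop_diff)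
  have AopXt: "Aop A (Xt k) = 0" for k
    by (induction k) (simp_all add: Xt0 Xt_step Aop_add Aop_scale Aop_res Aop_zero)
  have AD: "Aop A D = b" using Aop_inv[OF inv] D_def by simp
  have AopW: "Aop A W = 0" by (simp add: W_def Aop_diff AXs AD)
  have symS: "symm (S (Suc k))" for k unfolding Sdef by (rule gram_symm)
  have symAadj: "symm (Aadj A u)" for u by (rule Aadj_symm[OF symA])
  have symXt: "symm (Xt k)" for k
  proof (induction k)
    case 0 then show ?case by (simp add: Xt0 symm_zero)
  next
    case (Suc k) then show ?case
      by (simp add: Xt_step res_def symm_add symm_diff symm_scale symS symC symAadj)
  qed
  have symX: "symm (X (Suc k))" for k
    by (simp add: Xdef symm_add symm_diff symXt symAadj symm_Diagm)
  have Sdiag: "S (Suc k) $ i $ i = 1" for k i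
    using rows[of k i] by (simp add: Sdef power2_eq_square)
  have Ssdiag: "Ss $ i $ i = 1" for i
    using dSs by (simp add: diagv_def vec_eq_iff)
  have SpsdQ: "0 \<le> v \<bullet> (S (Suc k) *v v)" for k v
    unfolding Sdef by (rule gram_psd)
  have XS0: "X (Suc k) \<bullet> S (Suc k) = 0" for k
  proof -
    define G where "G = Xt (Suc k) + D"
    have Ssym: "S (Suc k) $ a $ c = S (Suc k) $ c $ a" for a c using symS[of k] by (simp add: symm_iff)
    have "Diagm (z (Suc k)) \<bullet> S (Suc k) = (\<Sum>i\<in>UNIV. \<Sum>j\<in>UNIV. G$i$j * S (Suc k) $ j $ i)"
      by (simp add: Diagm_inner Sdiag zdef diagv_def matrix_matrix_mult_def G_def D_def)
    also have "\<dots> = (\<Sum>i\<in>UNIV. \<Sum>j\<in>UNIV. G$i$j * S (Suc k) $ i $ j)"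
      by (intro sum.cong refl) (simp only: Ssym)
    also have "\<dots> = G \<bullet> S (Suc k)"
      by (simp add: inner_vec_def)
    finally show ?thesis by (simp add: Xdef G_def D_def inner_diff_left)
  qed
  have Xquad: "v \<bullet> (X (Suc k) *v v) \<ge> - tau k * (v \<bullet> v)" for k v
    by (rule lambda_min_quad[OF symX stop2])
  have XSs: "X (Suc k) \<bullet> Ss \<ge> - tau k * N" for k
  proof -
    have sSs: "symm Ss" and qSs: "\<forall>v. 0 \<le> v \<bullet> (Ss *v v)" using psdSs unfolding psd_def by auto
    have q: "\<forall>v. 0 \<le> v \<bullet> ((X (Suc k) + tau k *\<^sub>R mat 1) *v v)"
    proof
      fix v
      have "v \<bullet> ((X (Suc k) + tau k *\<^sub>R mat 1) *v v) = v \<bullet> (X (Suc k) *v v) + tau k * (v \<bullet> v)"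
        by (simp add: shift_mat1 inner_add_right)
      then show "0 \<le> v \<bullet> ((X (Suc k) + tau k *\<^sub>R mat 1) *v v)" using Xquad[of k v] by simp
    qed
    have "0 \<le> (X (Suc k) + tau k *\<^sub>R mat 1) \<bullet> Ss" by (rule psd_dual[OF sSs qSs q])
    also have "\<dots> = X (Suc k) \<bullet> Ss + tau k * (mat 1 \<bullet> Ss)" by (simp add: inner_add_left)
    also have "mat 1 \<bullet> Ss = N" by (simp add: mat1_inner Ssdiag N_def)
    finally show ?thesis by simp
  qed
  have XsS: "Xs \<bullet> S (Suc k) \<ge> 0" for k
  proof -
    have "\<forall>v. 0 \<le> v \<bullet> (Xs *v v)" using psdXs unfolding psd_def by auto
    then show ?thesis unfolding Sdef gram_inner by (intro sum_nonneg) auto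
  qed
  have Dz0: "Diagm u \<bullet> (S (Suc k) - Ss) = 0" for u k
    by (simp add: Diagm_inner Sdiag Ssdiag)
  have key: "(Xt (Suc k) - W) \<bullet> res k \<le> tau k * N" for k
  proof -
    define V where "V = Xt (Suc k) - W"
    have AopV: "Aop A V = 0" by (simp add: V_def Aop_diff AopXt AopW)
    have orthA: "V \<bullet> Aadj A u = 0" for u
    proof -
      have "V \<bullet> Aadj A u = Aadj A u \<bullet> V" by (rule inner_commute)
      also have "\<dots> = 0" by (simp add: Aadj_inner AopV)
      finally show ?thesis .
    qed
    have r: "res k = (S (Suc k) - Ss) + (Aadj A ys - Aadj A (y (Suc k)))"
      by (simp add: res_def Ss_eq algebra_simps)
    have e1: "V \<bullet> res k = V \<bullet> (S (Suc k) - Ss)"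
      unfolding r by (simp add: inner_add_right inner_diff_right orthA)
    have e2: "V = X (Suc k) + Diagm (z (Suc k)) - Xs - Diagm zs"
      by (simp add: V_def W_def Xdef D_def algebra_simps)
    have "V \<bullet> res k = X (Suc k) \<bullet> S (Suc k) - X (Suc k) \<bullet> Ss + Diagm (z (Suc k)) \<bullet> (S (Suc k) - Ss)
        - Xs \<bullet> S (Suc k) + Xs \<bullet> Ss - Diagm zs \<bullet> (S (Suc k) - Ss)"
      unfolding e1 unfolding e2 by (simp add: inner_add_left inner_diff_left inner_diff_right)
    then have "V \<bullet> res k = - (X (Suc k) \<bullet> Ss) - Xs \<bullet> S (Suc k)"
      using XS0[of k] XsSs Dz0 by simp
    then show ?thesis using XSs[of k] XsS[of k] unfolding V_def by linarith
  qed
  define E where "E k = (Xt k - W) \<bullet> (Xt k - W)" for k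
  have sigpos: "0 \<le> sigma k" for k using sigk[of k] sig by linarith
  have fe: "E (Suc k) \<le> E k + 2 * sigma k * (tau k * N) - (sigma k)^2 * (res k \<bullet> res k)" for k
  proof -
    have "Xt (Suc k) - W = (Xt k - W) + sigma k *\<^sub>R res k" by (simp add: Xt_step algebra_simps)
    then have "E (Suc k) = E k + 2 * sigma k * ((Xt (Suc k) - W) \<bullet> res k) - (sigma k)^2 * (res k \<bullet> res k)"
      unfolding E_def by (simp only: fejer_id)
    moreover have "2 * sigma k * ((Xt (Suc k) - W) \<bullet> res k) \<le> 2 * sigma k * (tau k * N)"
      using key[of k] sigpos[of k] by (intro mult_left_mono) auto
    ultimately show ?thesis by linarith
  qed
  have tele: "E n + (\<Sum>k<n. (sigma k)^2 * (res k \<bullet> res k)) \<le> E 0 + (\<Sum>k<n. 2 * sigma k * (tau k * N))" for n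
  proof (induction n)
    case 0 then show ?case by simp
  next
    case (Suc n) then show ?case using fe[of n] by simp
  qed
  have Npos: "0 \<le> N" by (simp add: N_def)
  define Bd where "Bd = E 0 + 2 * sigma_max * N * suminf tau"
  have bnd: "(\<Sum>k<n. res k \<bullet> res k) \<le> Bd / sigma_min^2" for n
  proof -
    have "(\<Sum>k<n. 2 * sigma k * (tau k * N)) \<le> (\<Sum>k<n. 2 * sigma_max * N * tau k)"
    proof (intro sum_mono)
      fix k
      have "sigma k * (tau k * N) \<le> sigma_max * (tau k * N)"
        using sigk[of k] tau_pos[of k] Npos by (intro mult_right_mono) auto
      then show "2 * sigma k * (tau k * N) \<le> 2 * sigma_max * N * tau k" by (simp add: algebra_simps)
    qed
    also have "\<dots> = 2 * sigma_max * N * (\<Sum>k<n. tau k)" by (simp add: sum_distrib_left)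
    also have "\<dots> \<le> 2 * sigma_max * N * suminf tau"
      using sig Npos sum_le_suminf[OF tau_sum, of "{..<n}"] tau_pos
      by (intro mult_left_mono) (auto intro: less_imp_le)
    finally have s1: "(\<Sum>k<n. 2 * sigma k * (tau k * N)) \<le> 2 * sigma_max * N * suminf tau" .
    have s2: "sigma_min^2 * (\<Sum>k<n. res k \<bullet> res k) \<le> (\<Sum>k<n. (sigma k)^2 * (res k \<bullet> res k))"
      unfolding sum_distrib_left
    proof (intro sum_mono)
      fix k
      have "sigma_min^2 \<le> (sigma k)^2" using sigk[of k] sig by (intro power_mono) auto
      then show "sigma_min^2 * (res k \<bullet> res k) \<le> (sigma k)^2 * (res k \<bullet> res k)"
        by (intro mult_right_mono) auto
    qed
    have "0 \<le> E n" unfolding E_def by simp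
    then have "sigma_min^2 * (\<Sum>k<n. res k \<bullet> res k) \<le> Bd"
      using tele[of n] s1 s2 unfolding Bd_def by linarith
    then show ?thesis using sig by (simp add: field_simps)
  qed
  have summ: "summable (\<lambda>k. res k \<bullet> res k)"
    by (rule summableI_nonneg_bounded[OF _ bnd]) simp
  have "(\<lambda>k. res k \<bullet> res k) \<longlonglongrightarrow> 0" by (rule summable_LIMSEQ_zero[OF summ])
  then have "(\<lambda>k. sqrt (res k \<bullet> res k)) \<longlonglongrightarrow> sqrt 0" by (rule tendsto_real_sqrt)
  then have "(\<lambda>k. norm (res k)) \<longlonglongrightarrow> 0" by (simp add: norm_eq_sqrt_inner)
  then have res_lim: "res \<longlonglongrightarrow> 0" by (simp add: tendsto_norm_zero_iff)
  obtain phi where phi_sm: "strict_mono phi" and phi1: "\<forall>j. 1 \<le> phi j"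
    and L: "((\<lambda>j. (S (phi j), y (phi j), X (phi j), z (phi j))) \<longlongrightarrow> (Sh, yh, Xh, zh)) sequentially"
    using limpt by blast
  define psi where "psi j = phi j - 1" for j
  have pp: "phi j = Suc (psi j)" for j using phi1[rule_format, of j] by (simp add: psi_def)
  have psi_sm: "strict_mono psi"
    unfolding strict_mono_def
  proof (intro allI impI)
    fix i j :: nat assume "i < j"
    then have "phi i < phi j" using phi_sm by (simp add: strict_mono_def)
    then show "psi i < psi j" using pp[of i] pp[of j] by simp
  qed
  have LS: "(\<lambda>j. S (Suc (psi j))) \<longlonglongrightarrow> Sh" using tendsto_fst[OF L] by (simp add: pp)
  have L2: "(\<lambda>j. (y (phi j), X (phi j), z (phi j))) \<longlonglongrightarrow> (yh, Xh, zh)" using tendsto_snd[OF L] by simp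
  have Ly: "(\<lambda>j. y (Suc (psi j))) \<longlonglongrightarrow> yh" using tendsto_fst[OF L2] by (simp add: pp)
  have L3: "(\<lambda>j. (X (phi j), z (phi j))) \<longlonglongrightarrow> (Xh, zh)" using tendsto_snd[OF L2] by simp
  have LX: "(\<lambda>j. X (Suc (psi j))) \<longlonglongrightarrow> Xh" using tendsto_fst[OF L3] by (simp add: pp)
  have Lz: "(\<lambda>j. z (Suc (psi j))) \<longlonglongrightarrow> zh" using tendsto_snd[OF L3] by (simp add: pp)
  have resp: "(\<lambda>j. res (psi j)) \<longlonglongrightarrow> 0"
    using LIMSEQ_subseq_LIMSEQ[OF res_lim psi_sm] by (simp add: o_def)
  have taup: "(\<lambda>j. tau (psi j)) \<longlonglongrightarrow> 0"
    using LIMSEQ_subseq_LIMSEQ[OF summable_LIMSEQ_zero[OF tau_sum] psi_sm] by (simp add: o_def)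
  have "(\<lambda>j. res (psi j)) \<longlonglongrightarrow> Sh + C - Aadj A yh"
    unfolding res_def by (intro tendsto_intros LS Aadj_tendsto Ly)
  from LIMSEQ_unique[OF this resp] have K1: "Sh = Aadj A yh - C" by (simp add: algebra_simps)
  have symSh: "symm Sh" by (rule symm_lim[OF LS symS])
  have qSh: "0 \<le> v \<bullet> (Sh *v v)" for v
  proof -
    have "(\<lambda>j. S (Suc (psi j)) \<bullet> outer v) \<longlonglongrightarrow> Sh \<bullet> outer v" by (intro tendsto_intros LS)
    moreover have "\<forall>j. 0 \<le> S (Suc (psi j)) \<bullet> outer v" using SpsdQ by (simp add: quad_outer)
    ultimately have "0 \<le> Sh \<bullet> outer v" by (intro LIMSEQ_le_const) auto
    then show ?thesis by (simp add: quad_outer)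
  qed
  have dSh: "diagv Sh = (\<chi> i. 1)"
  proof -
    have "Sh $ i $ i = 1" for i
    proof -
      have "(\<lambda>j. S (Suc (psi j)) $ i $ i) \<longlonglongrightarrow> Sh $ i $ i" by (intro tendsto_intros LS)
      moreover have "(\<lambda>j. S (Suc (psi j)) $ i $ i) \<longlonglongrightarrow> 1" by (simp add: Sdiag)
      ultimately show ?thesis by (rule LIMSEQ_unique)
    qed
    then show ?thesis by (simp add: diagv_def vec_eq_iff)
  qed
  have symXh: "symm Xh" by (rule symm_lim[OF LX symX])
  have qXh: "0 \<le> v \<bullet> (Xh *v v)" for v
  proof -
    have "(\<lambda>j. X (Suc (psi j)) \<bullet> outer v + tau (psi j) * (v \<bullet> v)) \<longlonglongrightarrow> Xh \<bullet> outer v + 0 * (v \<bullet> v)"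
      by (intro tendsto_intros LX taup)
    moreover have "\<forall>j. 0 \<le> X (Suc (psi j)) \<bullet> outer v + tau (psi j) * (v \<bullet> v)"
    proof
      fix j
      have "- (tau (psi j) * (v \<bullet> v)) \<le> v \<bullet> (X (Suc (psi j)) *v v)" using Xquad[of "psi j" v] by simp
      then show "0 \<le> X (Suc (psi j)) \<bullet> outer v + tau (psi j) * (v \<bullet> v)"
        by (simp add: quad_outer)
    qed
    ultimately have "0 \<le> Xh \<bullet> outer v + 0 * (v \<bullet> v)" by (intro LIMSEQ_le_const) auto
    then show ?thesis by (simp add: quad_outer)
  qed
  have K5: "Xh \<bullet> Sh = 0"
  proof -
    have "(\<lambda>j. X (Suc (psi j)) \<bullet> S (Suc (psi j))) \<longlonglongrightarrow> Xh \<bullet> Sh" by (intro tendsto_intros LX LS)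
    moreover have "(\<lambda>j. X (Suc (psi j)) \<bullet> S (Suc (psi j))) \<longlonglongrightarrow> 0" by (simp add: XS0)
    ultimately show ?thesis by (rule LIMSEQ_unique)
  qed
  have K6: "Aop A (Xh + Diagm zh) = b"
  proof -
    have eqk: "Aop A (X (Suc k) + Diagm (z (Suc k))) = b" for k
    proof -
      have "X (Suc k) + Diagm (z (Suc k)) = Xt (Suc k) + D" by (simp add: Xdef D_def)
      then show ?thesis by (simp add: Aop_add AopXt AD)
    qed
    have "(\<lambda>j. Aop A (X (Suc (psi j)) + Diagm (z (Suc (psi j))))) \<longlonglongrightarrow> Aop A (Xh + Diagm zh)"
      by (intro Aop_tendsto tendsto_add LX Diagm_tendsto Lz)
    moreover have "(\<lambda>j. Aop A (X (Suc (psi j)) + Diagm (z (Suc (psi j))))) \<longlonglongrightarrow> b" by (simp add: eqk)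
    ultimately show ?thesis by (rule LIMSEQ_unique)
  qed
  show ?thesis unfolding is_KKT_def psd_def frob_inner_eq
    using K1 symSh qSh dSh symXh qXh K5 K6 by blast
qed


end
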